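(* For every Markov kernel $P_{Y|X}:\mathcal X\to\mathcal Y$ between measurable spaces, $$\eta_{\chi^2}(P_{Y|X})=\eta_{\mathrm{KL}}(P_{Y|X}).$$
   Context: For $P\ll Q$: $D(P\|Q)=\int \log\frac{dP}{dQ}\,dP$ (KL divergence), $\chi^2(P\|Q)=\int (\frac{dP}{dQ})^2dQ-1$. For a divergence $D_f$ (either of these), for $Q$ not a point mass, $\eta_f(P_{Y|X},Q)=\sup\{D_f(P_{Y|X}\circ P\|P_{Y|X}\circ Q)/D_f(P\|Q): 0<D_f(P\|Q)<\infty\}$ where $P_{Y|X}\circ P$ is the output distribution induced by input distribution $P$, and $\eta_f(P_{Y|X})=\sup_Q\eta_f(P_{Y|X},Q)$ over $Q$ not a point mass. $\eta_{\mathrm{KL}}$ and $\eta_{\chi^2}$ denote these coefficients for KL and $\chi^2$ divergence respectively. *)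

theory Defs
  imports "HOL-Probability.Probability"
begin

text \<open>The density dP/dQ is
  the Radon-Nikodym derivative RN_deriv Q P (so that density Q (RN_deriv Q P) = P).\<close>

definition kl_div :: "'a measure \<Rightarrow> 'a measure \<Rightarrow> ereal" where
  "kl_div P Q =
     (if sets P = sets Q \<and> absolutely_continuous Q P
      then enn2ereal (\<integral>\<^sup>+ x. ennreal (ln (enn2real (RN_deriv Q P x))) \<partial>P)
         - enn2ereal (\<integral>\<^sup>+ x. ennreal (- ln (enn2real (RN_deriv Q P x))) \<partial>P)
      else \<infinity>)"

definition chi2_div :: "'a measure \<Rightarrow> 'a measure \<Rightarrow> ereal" where
  "chi2_div P Q =
     (if sets P = sets Q \<and> absolutely_continuous Q P
      then enn2ereal (\<integral>\<^sup>+ x. (RN_deriv Q P x)\<^sup>2 \<partial>Q) - 1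
      else \<infinity>)"

definition point_mass :: "'a measure \<Rightarrow> 'a measure \<Rightarrow> bool" where
  "point_mass X Q \<longleftrightarrow> (\<exists>x\<in>space X. Q = return X x)"

text \<open>Contraction coefficient eta_f(K, Q) of a Markov kernel K from X to Y
  (K \<in> measurable X (prob_algebra Y)) at input distribution Q, for a divergence D.\<close>
definition eta_at ::
  "('b measure \<Rightarrow> 'b measure \<Rightarrow> ereal) \<Rightarrow> ('a measure \<Rightarrow> 'a measure \<Rightarrow> ereal)
   \<Rightarrow> 'a measure \<Rightarrow> ('a \<Rightarrow> 'b measure) \<Rightarrow> 'a measure \<Rightarrow> ereal" where
  "eta_at DY DX X K Q =
     (SUP P \<in> {P \<in> space (prob_algebra X). 0 < DX P Q \<and> DX P Q < \<infinity>}.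
        DY (bind P K) (bind Q K) / DX P Q)"

definition eta ::
  "('b measure \<Rightarrow> 'b measure \<Rightarrow> ereal) \<Rightarrow> ('a measure \<Rightarrow> 'a measure \<Rightarrow> ereal)
   \<Rightarrow> 'a measure \<Rightarrow> ('a \<Rightarrow> 'b measure) \<Rightarrow> ereal" where
  "eta DY DX X K =
     (SUP Q \<in> {Q \<in> space (prob_algebra X). \<not> point_mass X Q}. eta_at DY DX X K Q)"

definition eta_KL :: "'a measure \<Rightarrow> ('a \<Rightarrow> 'b measure) \<Rightarrow> ereal" where
  "eta_KL X K = eta kl_div kl_div X K"

definition eta_chi2 :: "'a measure \<Rightarrow> ('a \<Rightarrow> 'b measure) \<Rightarrow> ereal" where
  "eta_chi2 X K = eta chi2_div chi2_div X K"

end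

theory Submission
  imports Defs
begin

definition ww :: "real \<Rightarrow> real" where "ww z = z * ln z - z + 1"
definition kk :: "real \<Rightarrow> real \<Rightarrow> real" where "kk t y = (1-t) * (y-1)^2 / (1 - t + t*y)"

lemma ln_ge_1_minus_inv: "0 < (s::real) \<Longrightarrow> (s - 1) / s \<le> ln s"
proof -
  assume s: "0 < s"
  have "ln (1/s) \<le> 1/s - 1" using s ln_le_minus_one[of "1/s"] by simp
  then show ?thesis using s by (simp add: ln_div divide_simps)
qed

lemma deriv_ww: "0 < s \<Longrightarrow> DERIV ww s :> ln s"
  unfolding ww_def
  by (auto intro!: derivative_eq_intros simp: field_simps)

lemma ww_upper:
  assumes e: "0 < e" "e < 1" and z: "z \<ge> 1 - e"
  shows "ww z \<le> (z-1)^2 / (2*(1-e))"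
proof -
  define K where "K = 1/(1-e)"
  have K: "K \<ge> 1" "K > 0" using e by (auto simp: K_def field_simps)
  define g where "g s = K*(s-1)^2/2 - ww s" for s
  have dg: "DERIV g s :> K*(s-1) - ln s" if "0 < s" for s
    unfolding g_def using that
    by (auto intro!: derivative_eq_intros deriv_ww simp: power2_eq_square field_simps)
  have g1: "g 1 = 0" by (simp add: g_def ww_def)
  have "g z \<ge> 0"
  proof (cases "z \<ge> 1")
    case True
    have "g 1 \<le> g z"
    proof (rule DERIV_nonneg_imp_nondecreasing[OF True])
      fix s assume s: "1 \<le> s" "s \<le> z"
      have "ln s \<le> s - 1" using s by (intro ln_le_minus_one) auto
      also have "s - 1 \<le> K*(s-1)" using mult_right_mono[of 1 K "s-1"] K s by simp
      finally show "\<exists>y. DERIV g s :> y \<and> 0 \<le> y" using dg[of s] s by (intro exI[of _ "K*(s-1) - ln s"]) auto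
    qed
    then show ?thesis using g1 by simp
  next
    case False
    have zpos: "z > 0" using z e by linarith
    have "g z \<ge> g 1"
    proof (rule DERIV_nonpos_imp_nonincreasing[of z 1 g])
      show "z \<le> 1" using False by simp
      fix s assume s: "z \<le> s" "s \<le> 1"
      have sp: "s > 0" using s zpos by linarith
      have "K*(s-1) \<le> (s-1)/s"
      proof -
        have "1/s \<le> K" using sp s z e unfolding K_def by (simp add: field_simps)
        then have "(1-s) * (1/s) \<le> (1-s) * K" using s by (intro mult_left_mono) auto
        moreover have "(s-1)/s = - ((1-s)*(1/s))" by (simp add: diff_divide_distrib)
        moreover have "K*(s-1) = -((1-s)*K)" by (simp add: algebra_simps)
        ultimately show ?thesis by linarith
      qed
      also have "\<dots> \<le> ln s" using sp by (rule ln_ge_1_minus_inv)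
      finally show "\<exists>y. DERIV g s :> y \<and> y \<le> 0" using dg[OF sp] by (intro exI[of _ "K*(s-1) - ln s"]) auto
    qed
    then show ?thesis using g1 by simp
  qed
  then show ?thesis unfolding g_def K_def by (simp add: mult.commute)
qed

lemma ww_lower:
  assumes z: "z > 0"
  shows "(z-1)^2 / (2 * max z 1) \<le> ww z"
proof -
  define L where "L = 1 / max z 1"
  have L: "L > 0" "L \<le> 1" using z by (auto simp: L_def field_simps)
  define g where "g s = ww s - L*(s-1)^2/2" for s
  have dg: "DERIV g s :> ln s - L*(s-1)" if "0 < s" for s
    unfolding g_def using that
    by (auto intro!: derivative_eq_intros deriv_ww simp: power2_eq_square field_simps)
  have g1: "g 1 = 0" by (simp add: g_def ww_def)
  have "g z \<ge> 0"
  proof (cases "z \<ge> 1")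
    case True
    have "g 1 \<le> g z"
    proof (rule DERIV_nonneg_imp_nondecreasing[OF True])
      fix s assume s: "1 \<le> s" "s \<le> z"
      have sp: "s > 0" using s by linarith
      have "L*(s-1) \<le> (s-1)/s"
      proof -
        have "L \<le> 1/s" using s True unfolding L_def by (simp add: field_simps)
        then have "(s-1) * L \<le> (s-1) * (1/s)" using s by (intro mult_left_mono) auto
        then show ?thesis by (simp add: field_simps)
      qed
      also have "\<dots> \<le> ln s" using sp by (rule ln_ge_1_minus_inv)
      finally show "\<exists>y. DERIV g s :> y \<and> 0 \<le> y" using dg[OF sp] by (intro exI[of _ "ln s - L*(s-1)"]) auto
    qed
    then show ?thesis using g1 by simp
  next
    case False
    have "g z \<ge> g 1"
    proof (rule DERIV_nonpos_imp_nonincreasing[of z 1 g])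
      show "z \<le> 1" using False by simp
      fix s assume s: "z \<le> s" "s \<le> 1"
      have sp: "s > 0" using s z by linarith
      have "ln s \<le> s - 1" using sp by (intro ln_le_minus_one) auto
      also have "s - 1 \<le> L*(s-1)" using mult_right_mono_neg[of L 1 "s-1"] L s by simp
      finally show "\<exists>y. DERIV g s :> y \<and> y \<le> 0" using dg[OF sp] by (intro exI[of _ "ln s - L*(s-1)"]) auto
    qed
    then show ?thesis using g1 by simp
  qed
  then show ?thesis unfolding g_def L_def by simp
qed

lemma ww_nonneg: "z \<ge> 0 \<Longrightarrow> 0 \<le> ww z"
proof -
  assume z: "z \<ge> 0"
  show ?thesis
  proof (cases "z = 0")
    case True then show ?thesis by (simp add: ww_def)
  next
    case False
    then have "z > 0" using z by simp
    from ww_lower[OF this] show ?thesis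
      by (smt (verit) divide_nonneg_pos zero_le_power2)
  qed
qed

lemma ww_zero: "z \<ge> 0 \<Longrightarrow> ww z = 0 \<Longrightarrow> z = 1"
proof -
  assume z: "z \<ge> 0" and w: "ww z = 0"
  have "z \<noteq> 0" using w by (auto simp: ww_def)
  then have zp: "z > 0" using z by simp
  from ww_lower[OF zp] w have "(z-1)^2 / (2 * max z 1) \<le> 0" by simp
  moreover have "2 * max z 1 > 0" by simp
  ultimately have "(z-1)^2 \<le> 0" by (simp add: divide_le_0_iff)
  then show "z = 1" by simp
qed

lemma kk_measurable[measurable]: "(\<lambda>t. kk t y) \<in> borel_measurable borel"
  unfolding kk_def by measurable

lemma kk_nonneg: "0 \<le> t \<Longrightarrow> t \<le> 1 \<Longrightarrow> 0 \<le> y \<Longrightarrow> 0 \<le> kk t y"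
  unfolding kk_def by (intro divide_nonneg_nonneg mult_nonneg_nonneg) auto

lemma rep_point:
  assumes y: "y \<ge> 0"
  shows "(\<integral>\<^sup>+t. ennreal (kk t y) * indicator {0<..<1} t \<partial>lborel) = ennreal (ww y)"
proof (cases "y = 0")
  case True
  have "(\<integral>\<^sup>+t. ennreal (kk t y) * indicator {0<..<1} t \<partial>lborel) = (\<integral>\<^sup>+t. indicator {0<..<1::real} t \<partial>lborel)"
    by (intro nn_integral_cong) (auto simp: kk_def True split: split_indicator)
  also have "\<dots> = 1" by simp
  finally show ?thesis by (simp add: True ww_def)
next
  case False
  then have yp: "y > 0" using y by simp
  have rpos: "0 < 1 - t + t*y" if "0 \<le> t" "t \<le> 1" for t
  proof (cases "t = 1")
    case True then show ?thesis using yp by simp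
  next
    case False
    then have "0 < 1 - t" using that by simp
    moreover have "0 \<le> t*y" using that yp by simp
    ultimately show ?thesis by linarith
  qed
  define F where "F t = y * ln (1 - t + t*y) - (y-1)*t" for t
  have dF: "DERIV F t :> kk t y" if "t \<in> {0..1}" for t
  proof -
    have r: "0 < 1 - t + t*y" using rpos that by auto
    have "DERIV F t :> y * ((y - 1) / (1 - t + t*y)) - (y-1)"
      unfolding F_def using r
      by (auto intro!: derivative_eq_intros simp: field_simps)
    also have "y * ((y - 1) / (1 - t + t*y)) - (y-1) = kk t y"
      using r unfolding kk_def by (simp add: field_simps power2_eq_square)
    finally show ?thesis .
  qed
  have "(\<integral>\<^sup>+t. ennreal (kk t y) * indicator {0<..<1} t \<partial>lborel) = (\<integral>\<^sup>+t. ennreal (kk t y) * indicator {0..1} t \<partial>lborel)"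
    by (intro nn_integral_cong_AE eventually_mono[OF AE_conjI[OF AE_lborel_singleton[of 0] AE_lborel_singleton[of 1]]])
       (auto split: split_indicator)
  also have "\<dots> = F 1 - F 0"
    by (rule nn_integral_FTC_Icc) (auto intro: dF kk_nonneg y)
  also have "F 1 - F 0 = ww y" by (simp add: F_def ww_def algebra_simps)
  finally show ?thesis .
qed

lemma RN_deriv_density_AE:
  assumes Q: "prob_space Q" and f[measurable]: "f \<in> borel_measurable Q" and fnn: "\<And>x. 0 \<le> f x"
  shows "AE x in Q. enn2real (RN_deriv Q (density Q (\<lambda>x. ennreal (f x))) x) = f x"
proof -
  interpret prob_space Q by fact
  have "AE x in Q. ennreal (f x) = RN_deriv Q (density Q (\<lambda>x. ennreal (f x))) x"
    by (rule RN_deriv_unique) auto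
  then show ?thesis by eventually_elim (metis enn2real_ennreal fnn)
qed

lemma kl_density:
  assumes Q: "prob_space Q" and f[measurable]: "f \<in> borel_measurable Q" and fnn: "\<And>x. 0 \<le> f x"
    and int: "(\<integral>\<^sup>+x. ennreal (f x) \<partial>Q) = 1"
  shows "kl_div (density Q (\<lambda>x. ennreal (f x))) Q = enn2ereal (\<integral>\<^sup>+x. ennreal (ww (f x)) \<partial>Q)"
proof -
  interpret prob_space Q by fact
  define P where "P = density Q (\<lambda>x. ennreal (f x))"
  have sP: "sets P = sets Q" by (simp add: P_def)
  have ac: "absolutely_continuous Q P" unfolding P_def by (rule absolutely_continuousI_density) simp
  have AEQ: "AE x in Q. enn2real (RN_deriv Q P x) = f x"
    unfolding P_def by (rule RN_deriv_density_AE[OF Q f fnn])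
  have AEP: "AE x in P. enn2real (RN_deriv Q P x) = f x"
    by (rule absolutely_continuous_AE[OF sP ac AEQ])
  define A where "A = (\<integral>\<^sup>+x. ennreal (f x * ln (f x)) \<partial>Q)"
  define B where "B = (\<integral>\<^sup>+x. ennreal (- (f x * ln (f x))) \<partial>Q)"
  have eA: "(\<integral>\<^sup>+ x. ennreal (ln (enn2real (RN_deriv Q P x))) \<partial>P) = A"
  proof -
    have "(\<integral>\<^sup>+ x. ennreal (ln (enn2real (RN_deriv Q P x))) \<partial>P) = (\<integral>\<^sup>+ x. ennreal (ln (f x)) \<partial>P)"
      by (intro nn_integral_cong_AE eventually_mono[OF AEP]) simp
    also have "\<dots> = (\<integral>\<^sup>+ x. ennreal (f x) * ennreal (ln (f x)) \<partial>Q)"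
      unfolding P_def by (subst nn_integral_density) auto
    also have "\<dots> = A" unfolding A_def
      by (intro nn_integral_cong) (simp add: ennreal_mult'[OF fnn])
    finally show ?thesis .
  qed
  have eB: "(\<integral>\<^sup>+ x. ennreal (- ln (enn2real (RN_deriv Q P x))) \<partial>P) = B"
  proof -
    have "(\<integral>\<^sup>+ x. ennreal (- ln (enn2real (RN_deriv Q P x))) \<partial>P) = (\<integral>\<^sup>+ x. ennreal (- ln (f x)) \<partial>P)"
      by (intro nn_integral_cong_AE eventually_mono[OF AEP]) simp
    also have "\<dots> = (\<integral>\<^sup>+ x. ennreal (f x) * ennreal (- ln (f x)) \<partial>Q)"
      unfolding P_def by (subst nn_integral_density) auto
    also have "\<dots> = B" unfolding B_def
      by (intro nn_integral_cong) (simp add: ennreal_mult'[OF fnn, symmetric])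
    finally show ?thesis .
  qed
  have pt: "ennreal (ww (f x)) + ennreal (f x) + ennreal (- (f x * ln (f x))) = ennreal (f x * ln (f x)) + 1" for x
  proof -
    have w: "0 \<le> ww (f x)" by (rule ww_nonneg[OF fnn])
    show ?thesis
    proof (cases "f x * ln (f x) \<ge> 0")
      case True
      then have "ennreal (- (f x * ln (f x))) = 0" by (simp add: ennreal_neg)
      then show ?thesis using w fnn[of x] True
        by (simp add: ennreal_plus[symmetric] del: ennreal_plus) (simp add: ww_def)
    next
      case False
      then have "ennreal (f x * ln (f x)) = 0" by (simp add: ennreal_neg)
      then show ?thesis using w fnn[of x] False
        by (simp add: ennreal_plus[symmetric] del: ennreal_plus) (simp add: ww_def)
    qed
  qed
  have "(\<integral>\<^sup>+x. ennreal (ww (f x)) \<partial>Q) + 1 + B = A + 1"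
  proof -
    have "(\<integral>\<^sup>+x. ennreal (ww (f x)) + ennreal (f x) + ennreal (- (f x * ln (f x))) \<partial>Q)
       = (\<integral>\<^sup>+x. ennreal (f x * ln (f x)) + 1 \<partial>Q)" using pt by simp
    moreover have "(\<integral>\<^sup>+x. ennreal (ww (f x)) + ennreal (f x) + ennreal (- (f x * ln (f x))) \<partial>Q)
       = (\<integral>\<^sup>+x. ennreal (ww (f x)) \<partial>Q) + 1 + B"
      unfolding ww_def B_def using int by (simp add: nn_integral_add)
    moreover have "(\<integral>\<^sup>+x. ennreal (f x * ln (f x)) + 1 \<partial>Q) = A + 1"
      unfolding A_def by (simp add: nn_integral_add emeasure_space_1)
    ultimately show ?thesis by simp
  qed
  moreover have Bfin: "B < \<infinity>"
  proof -
    have "B \<le> (\<integral>\<^sup>+x. 1 \<partial>Q)" unfolding B_def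
    proof (intro nn_integral_mono)
      fix x
      have "0 \<le> ww (f x)" by (rule ww_nonneg[OF fnn])
      then have "- (f x * ln (f x)) \<le> 1" using fnn[of x] unfolding ww_def by linarith
      then show "ennreal (- (f x * ln (f x))) \<le> 1" by (simp add: ennreal_le_1)
    qed
    also have "\<dots> = 1" by (simp add: emeasure_space_1)
    finally show ?thesis by (simp add: le_less_trans)
  qed
  ultimately have "1 + A = 1 + ((\<integral>\<^sup>+x. ennreal (ww (f x)) \<partial>Q) + B)"
    by (simp add: ac_simps)
  then have "A = (\<integral>\<^sup>+x. ennreal (ww (f x)) \<partial>Q) + B"
    by (simp add: ennreal_add_left_cancel)
  then have "enn2ereal A - enn2ereal B = enn2ereal (\<integral>\<^sup>+x. ennreal (ww (f x)) \<partial>Q)"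
    using Bfin by (simp add: plus_ennreal.rep_eq ereal_add_diff_cancel enn2ereal_nonneg)
  then show ?thesis
    using sP ac eA eB unfolding kl_div_def P_def[symmetric] by simp
qed

lemma chi2_density:
  assumes Q: "prob_space Q" and f[measurable]: "f \<in> borel_measurable Q" and fnn: "\<And>x. 0 \<le> f x"
    and int: "(\<integral>\<^sup>+x. ennreal (f x) \<partial>Q) = 1"
  shows "chi2_div (density Q (\<lambda>x. ennreal (f x))) Q = enn2ereal (\<integral>\<^sup>+x. ennreal ((f x - 1)^2) \<partial>Q)"
proof -
  interpret prob_space Q by fact
  define P where "P = density Q (\<lambda>x. ennreal (f x))"
  have sP: "sets P = sets Q" by (simp add: P_def)
  have ac: "absolutely_continuous Q P" unfolding P_def by (rule absolutely_continuousI_density) simp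
  have AEQ: "AE x in Q. ennreal (f x) = RN_deriv Q P x"
    unfolding P_def by (rule RN_deriv_unique) auto
  have e1: "(\<integral>\<^sup>+x. (RN_deriv Q P x)\<^sup>2 \<partial>Q) = (\<integral>\<^sup>+x. ennreal ((f x)^2) \<partial>Q)"
    by (intro nn_integral_cong_AE eventually_mono[OF AEQ]) (metis ennreal_power fnn)
  have pt: "ennreal ((f x - 1)^2) + 2 * ennreal (f x) = ennreal ((f x)^2) + 1" for x
  proof -
    have "ennreal ((f x - 1)^2) + 2 * ennreal (f x) = ennreal ((f x - 1)^2 + 2 * f x)"
      using fnn[of x] by (simp add: ennreal_plus ennreal_mult)
    also have "(f x - 1)^2 + 2 * f x = (f x)^2 + 1" by (simp add: power2_eq_square algebra_simps)
    also have "ennreal ((f x)^2 + 1) = ennreal ((f x)^2) + 1" by (simp add: ennreal_plus)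
    finally show ?thesis .
  qed
  have "(\<integral>\<^sup>+x. ennreal ((f x - 1)^2) + 2 * ennreal (f x) \<partial>Q) = (\<integral>\<^sup>+x. ennreal ((f x)^2) + 1 \<partial>Q)"
    using pt by simp
  then have "(\<integral>\<^sup>+x. ennreal ((f x - 1)^2) \<partial>Q) + 2 = (\<integral>\<^sup>+x. ennreal ((f x)^2) \<partial>Q) + 1"
    using int by (simp add: nn_integral_add nn_integral_cmult emeasure_space_1)
  then have "1 + (\<integral>\<^sup>+x. ennreal ((f x)^2) \<partial>Q) = 1 + ((\<integral>\<^sup>+x. ennreal ((f x - 1)^2) \<partial>Q) + 1)"
    by (simp add: ac_simps one_add_one[symmetric] del: one_add_one)
  then have "(\<integral>\<^sup>+x. ennreal ((f x)^2) \<partial>Q) = (\<integral>\<^sup>+x. ennreal ((f x - 1)^2) \<partial>Q) + 1"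
    by (simp add: ennreal_add_left_cancel)
  then have "enn2ereal (\<integral>\<^sup>+x. (RN_deriv Q P x)\<^sup>2 \<partial>Q) - 1 = enn2ereal (\<integral>\<^sup>+x. ennreal ((f x - 1)^2) \<partial>Q)"
    using e1 by (simp add: plus_ennreal.rep_eq one_ennreal.rep_eq ereal_add_diff_cancel)
  then show ?thesis
    using sP ac unfolding chi2_div_def P_def[symmetric] by simp
qed

lemma nn_integral_space_density:
  assumes f[measurable]: "f \<in> borel_measurable Q"
  shows "emeasure (density Q f) (space Q) = (\<integral>\<^sup>+x. f x \<partial>Q)"
  by (subst emeasure_density) (auto intro!: nn_integral_cong split: split_indicator)

lemma prob_space_density1:
  assumes Q: "prob_space Q" and f[measurable]: "f \<in> borel_measurable Q"
    and int: "(\<integral>\<^sup>+x. ennreal (f x) \<partial>Q) = 1"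
  shows "prob_space (density Q (\<lambda>x. ennreal (f x)))"
  by (rule prob_spaceI) (simp add: nn_integral_space_density int)

lemma density_rep:
  assumes Q: "prob_space Q" and P: "prob_space P" and sP: "sets P = sets Q"
    and ac: "absolutely_continuous Q P"
  shows "\<exists>f. f \<in> borel_measurable Q \<and> (\<forall>x. 0 \<le> f x) \<and> (\<integral>\<^sup>+x. ennreal (f x) \<partial>Q) = 1
           \<and> P = density Q (\<lambda>x. ennreal (f x))"
proof -
  interpret Q: prob_space Q by fact
  interpret P: prob_space P by fact
  define f where "f x = enn2real (RN_deriv Q P x)" for x
  have fm[measurable]: "f \<in> borel_measurable Q" unfolding f_def by measurable
  have fin: "AE x in Q. RN_deriv Q P x \<noteq> \<infinity>"
    by (rule Q.RN_deriv_finite[OF _ ac sP]) unfold_locales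
  have "P = density Q (RN_deriv Q P)" using Q.density_RN_deriv[OF ac sP] by simp
  also have "\<dots> = density Q (\<lambda>x. ennreal (f x))"
    by (intro density_cong) (auto simp: f_def intro!: eventually_mono[OF fin] simp: less_top)
  finally have Pd: "P = density Q (\<lambda>x. ennreal (f x))" .
  have "(\<integral>\<^sup>+x. ennreal (f x) \<partial>Q) = emeasure P (space P)"
    using nn_integral_space_density[of "\<lambda>x. ennreal (f x)" Q] Pd by simp
  then have "(\<integral>\<^sup>+x. ennreal (f x) \<partial>Q) = 1" by (simp add: P.emeasure_space_1)
  moreover have "\<forall>x. 0 \<le> f x" by (simp add: f_def)
  ultimately show ?thesis using fm Pd by blast
qed

lemma chi2_mix:
  assumes Q: "prob_space Q" and f[measurable]: "f \<in> borel_measurable Q" and fnn: "\<And>x. 0 \<le> f x"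
    and int: "(\<integral>\<^sup>+x. ennreal (f x) \<partial>Q) = 1" and t: "0 \<le> t" "t < 1"
  shows "chi2_div (density Q (\<lambda>x. ennreal (f x))) (density Q (\<lambda>x. ennreal (1 - t + t * f x)))
       = enn2ereal (ennreal (1-t) * (\<integral>\<^sup>+x. ennreal (kk t (f x)) \<partial>Q))"
proof -
  interpret prob_space Q by fact
  define r where "r x = 1 - t + t * f x" for x
  have rm[measurable]: "r \<in> borel_measurable Q" unfolding r_def by measurable
  have rpos: "0 < r x" for x
  proof -
    have "0 \<le> t * f x" using t fnn[of x] by simp
    then show ?thesis using t unfolding r_def by linarith
  qed
  have intr: "(\<integral>\<^sup>+x. ennreal (r x) \<partial>Q) = 1"
  proof -
    have "(\<integral>\<^sup>+x. ennreal (r x) \<partial>Q) = (\<integral>\<^sup>+x. ennreal (1-t) + ennreal t * ennreal (f x) \<partial>Q)"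
      using t fnn by (intro nn_integral_cong) (simp add: r_def ennreal_plus ennreal_mult)
    also have "\<dots> = ennreal (1-t) + ennreal t"
      using int by (simp add: nn_integral_add nn_integral_cmult emeasure_space_1)
    also have "\<dots> = 1" using t by (simp add: ennreal_plus[symmetric] del: ennreal_plus)
    finally show ?thesis .
  qed
  define Q' where "Q' = density Q (\<lambda>x. ennreal (r x))"
  have Q': "prob_space Q'" unfolding Q'_def by (rule prob_space_density1[OF Q rm intr])
  define g where "g x = f x / r x" for x
  have gm[measurable]: "g \<in> borel_measurable Q'" unfolding g_def Q'_def by measurable
  have gmQ[measurable]: "g \<in> borel_measurable Q" unfolding g_def by measurable
  have gnn: "0 \<le> g x" for x unfolding g_def using fnn[of x] rpos[of x] by simp
  have rg: "ennreal (r x) * ennreal (g x) = ennreal (f x)" for x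
    using rpos[of x] gnn[of x] by (simp add: ennreal_mult[symmetric] g_def del: ennreal_mult)
  have intg: "(\<integral>\<^sup>+x. ennreal (g x) \<partial>Q') = 1"
    unfolding Q'_def by (subst nn_integral_density) (auto simp: rg int)
  have dd: "density Q' (\<lambda>x. ennreal (g x)) = density Q (\<lambda>x. ennreal (f x))"
    unfolding Q'_def by (subst density_density_eq) (auto simp: rg)
  have "chi2_div (density Q (\<lambda>x. ennreal (f x))) Q' = enn2ereal (\<integral>\<^sup>+x. ennreal ((g x - 1)^2) \<partial>Q')"
    using chi2_density[OF Q' gm gnn intg] dd by simp
  also have "(\<integral>\<^sup>+x. ennreal ((g x - 1)^2) \<partial>Q') = (\<integral>\<^sup>+x. ennreal (r x) * ennreal ((g x - 1)^2) \<partial>Q)"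
    unfolding Q'_def by (subst nn_integral_density) (auto simp: g_def)
  also have "\<dots> = (\<integral>\<^sup>+x. ennreal (1-t) * ennreal (kk t (f x)) \<partial>Q)"
  proof (intro nn_integral_cong)
    fix x
    have R: "r x \<noteq> 0" using rpos[of x] by simp
    have "r x * (g x - 1)^2 = (f x - r x)^2 / r x"
      using R unfolding g_def by (simp add: field_simps power2_eq_square)
    also have "f x - r x = (1-t) * (f x - 1)" unfolding r_def by (simp add: algebra_simps)
    also have "((1-t) * (f x - 1))^2 / r x = (1-t) * kk t (f x)"
      unfolding kk_def r_def by (simp add: power2_eq_square)
    finally have "r x * (g x - 1)^2 = (1-t) * kk t (f x)" .
    moreover have "0 \<le> kk t (f x)" using t fnn[of x] by (intro kk_nonneg) auto
    ultimately show "ennreal (r x) * ennreal ((g x - 1)^2) = ennreal (1-t) * ennreal (kk t (f x))"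
      using rpos[of x] t by (simp add: ennreal_mult[symmetric] del: ennreal_mult)
  qed
  also have "\<dots> = ennreal (1-t) * (\<integral>\<^sup>+x. ennreal (kk t (f x)) \<partial>Q)"
    by (rule nn_integral_cmult) (measurable, unfold kk_def, measurable)
  finally show ?thesis unfolding Q'_def r_def .
qed

lemma int_mix:
  assumes Q: "prob_space Q" and f[measurable]: "f \<in> borel_measurable Q" and fnn: "\<And>x. 0 \<le> f x"
    and int: "(\<integral>\<^sup>+x. ennreal (f x) \<partial>Q) = 1" and t: "0 \<le> t" "t \<le> 1"
  shows "(\<integral>\<^sup>+x. ennreal (1 - t + t * f x) \<partial>Q) = 1"
proof -
  interpret prob_space Q by fact
  have "(\<integral>\<^sup>+x. ennreal (1 - t + t * f x) \<partial>Q) = (\<integral>\<^sup>+x. ennreal (1-t) + ennreal t * ennreal (f x) \<partial>Q)"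
    using t fnn by (intro nn_integral_cong) (simp add: ennreal_plus ennreal_mult)
  also have "\<dots> = ennreal (1-t) + ennreal t"
    using int by (simp add: nn_integral_add nn_integral_cmult emeasure_space_1)
  also have "\<dots> = 1" using t by (simp add: ennreal_plus[symmetric] del: ennreal_plus)
  finally show ?thesis .
qed

lemma mix_split:
  assumes "0 \<le> t" "t \<le> 1" "0 \<le> (y::real)"
  shows "ennreal (1 - t + t * y) = ennreal (1-t) + ennreal t * ennreal y"
  using assms by (simp add: ennreal_plus ennreal_mult)

lemma bind_density_rep:
  assumes Q: "Q \<in> space (prob_algebra X)" and K: "K \<in> X \<rightarrow>\<^sub>M prob_algebra Y"
    and f[measurable]: "f \<in> borel_measurable Q" and fnn: "\<And>x. 0 \<le> f x"
    and int: "(\<integral>\<^sup>+x. ennreal (f x) \<partial>Q) = 1"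
  shows "\<exists>h. h \<in> borel_measurable (bind Q K) \<and> (\<forall>y. 0 \<le> h y) \<and> (\<integral>\<^sup>+y. ennreal (h y) \<partial>(bind Q K)) = 1 \<and>
     (\<forall>t. 0 \<le> t \<longrightarrow> t \<le> 1 \<longrightarrow>
        bind (density Q (\<lambda>x. ennreal (1 - t + t * f x))) K = density (bind Q K) (\<lambda>y. ennreal (1 - t + t * h y)))"
proof -
  have sQ: "sets Q = sets X" and pQ: "prob_space Q" using Q by (auto simp: space_prob_algebra)
  interpret Qp: prob_space Q by (rule pQ)
  have Kmeas: "(\<lambda>x. emeasure (K x) A) \<in> borel_measurable Q" if "A \<in> sets Y" for A
    using measurable_compose[OF measurable_prob_algebraD[OF K] measurable_emeasure_subprob_algebra[OF that]]
    by (simp add: measurable_cong_sets[OF sQ refl])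
  define P where "P = density Q (\<lambda>x. ennreal (f x))"
  have P: "P \<in> space (prob_algebra X)"
    using prob_space_density1[OF pQ f int] sQ by (simp add: space_prob_algebra P_def)
  define QK where "QK = bind Q K"
  define PK where "PK = bind P K"
  have sQK: "sets QK = sets Y" unfolding QK_def by (rule sets_bind'[OF Q K])
  have sPK: "sets PK = sets Y" unfolding PK_def by (rule sets_bind'[OF P K])
  have pQK: "prob_space QK" unfolding QK_def by (rule prob_space_bind'[OF Q K])
  have pPK: "prob_space PK" unfolding PK_def by (rule prob_space_bind'[OF P K])
  have ac: "absolutely_continuous QK PK"
    unfolding absolutely_continuous_def
  proof
    fix A assume A: "A \<in> null_sets QK"
    then have AY: "A \<in> sets Y" and A0: "emeasure QK A = 0" using sQK by auto
    have KA[measurable]: "(\<lambda>x. emeasure (K x) A) \<in> borel_measurable Q" by (rule Kmeas[OF AY])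
    have "(\<integral>\<^sup>+x. emeasure (K x) A \<partial>Q) = 0"
      using A0 emeasure_bind_prob_algebra[OF Q K AY] by (simp add: QK_def)
    then have ae: "AE x in Q. emeasure (K x) A = 0"
      using nn_integral_0_iff_AE[OF Kmeas[OF AY]] by simp
    have "emeasure PK A = (\<integral>\<^sup>+x. emeasure (K x) A \<partial>P)"
      unfolding PK_def by (rule emeasure_bind_prob_algebra[OF P K AY])
    also have "\<dots> = (\<integral>\<^sup>+x. ennreal (f x) * emeasure (K x) A \<partial>Q)"
      unfolding P_def by (rule nn_integral_density) (auto intro: Kmeas[OF AY])
    also have "\<dots> = 0"
      by (subst nn_integral_0_iff_AE) (auto intro: Kmeas[OF AY] eventually_mono[OF ae])
    finally show "A \<in> null_sets PK" using AY sPK by auto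
  qed
  obtain h where hm[measurable]: "h \<in> borel_measurable QK" and hnn: "\<forall>y. 0 \<le> h y"
    and hint: "(\<integral>\<^sup>+y. ennreal (h y) \<partial>QK) = 1" and PKd: "PK = density QK (\<lambda>y. ennreal (h y))"
    using density_rep[OF pQK pPK _ ac] sQK sPK by auto
  have mix: "bind (density Q (\<lambda>x. ennreal (1 - t + t * f x))) K = density QK (\<lambda>y. ennreal (1 - t + t * h y))"
    if t: "0 \<le> t" "t \<le> 1" for t
  proof -
    define Qt where "Qt = density Q (\<lambda>x. ennreal (1 - t + t * f x))"
    have Qt: "Qt \<in> space (prob_algebra X)"
      using prob_space_density1[OF pQ _ int_mix[OF pQ f fnn int t]] sQ by (simp add: space_prob_algebra Qt_def)
    show ?thesis unfolding Qt_def[symmetric]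
    proof (rule measure_eqI)
      show "sets (bind Qt K) = sets (density QK (\<lambda>y. ennreal (1 - t + t * h y)))"
        using sets_bind'[OF Qt K] sQK by simp
      fix A assume "A \<in> sets (bind Qt K)"
      then have AY: "A \<in> sets Y" using sets_bind'[OF Qt K] by simp
      then have AQK[measurable]: "A \<in> sets QK" using sQK by simp
      have KA[measurable]: "(\<lambda>x. emeasure (K x) A) \<in> borel_measurable Q" by (rule Kmeas[OF AY])
      have "emeasure (bind Qt K) A = (\<integral>\<^sup>+x. emeasure (K x) A \<partial>Qt)"
        by (rule emeasure_bind_prob_algebra[OF Qt K AY])
      also have "\<dots> = (\<integral>\<^sup>+x. ennreal (1 - t + t * f x) * emeasure (K x) A \<partial>Q)"
        unfolding Qt_def by (rule nn_integral_density) (auto intro: Kmeas[OF AY])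
      also have "\<dots> = (\<integral>\<^sup>+x. ennreal (1-t) * emeasure (K x) A + ennreal t * (ennreal (f x) * emeasure (K x) A) \<partial>Q)"
        by (intro nn_integral_cong) (simp only: mix_split[OF t fnn] distrib_right mult.assoc)
      also have "\<dots> = ennreal (1-t) * (\<integral>\<^sup>+x. emeasure (K x) A \<partial>Q) + ennreal t * (\<integral>\<^sup>+x. ennreal (f x) * emeasure (K x) A \<partial>Q)"
        using Kmeas[OF AY] by (simp add: nn_integral_add nn_integral_cmult)
      also have "(\<integral>\<^sup>+x. emeasure (K x) A \<partial>Q) = emeasure QK A"
        unfolding QK_def by (rule emeasure_bind_prob_algebra[OF Q K AY, symmetric])
      also have "(\<integral>\<^sup>+x. ennreal (f x) * emeasure (K x) A \<partial>Q) = emeasure PK A"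
      proof -
        have "emeasure PK A = (\<integral>\<^sup>+x. emeasure (K x) A \<partial>P)"
          unfolding PK_def by (rule emeasure_bind_prob_algebra[OF P K AY])
        also have "\<dots> = (\<integral>\<^sup>+x. ennreal (f x) * emeasure (K x) A \<partial>Q)"
          unfolding P_def by (rule nn_integral_density) (auto intro: Kmeas[OF AY])
        finally show ?thesis by simp
      qed
      also have "emeasure PK A = (\<integral>\<^sup>+y. ennreal (h y) * indicator A y \<partial>QK)"
        unfolding PKd by (rule emeasure_density) auto
      also have "emeasure QK A = (\<integral>\<^sup>+y. indicator A y \<partial>QK)" by simp
      also have "ennreal (1-t) * (\<integral>\<^sup>+y. indicator A y \<partial>QK) + ennreal t * (\<integral>\<^sup>+y. ennreal (h y) * indicator A y \<partial>QK)
          = (\<integral>\<^sup>+y. ennreal (1-t) * indicator A y + ennreal t * (ennreal (h y) * indicator A y) \<partial>QK)"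
        by (simp add: nn_integral_add nn_integral_cmult)
      also have "\<dots> = (\<integral>\<^sup>+y. ennreal (1 - t + t * h y) * indicator A y \<partial>QK)"
        by (intro nn_integral_cong) (simp only: mix_split[OF t hnn[rule_format]] distrib_right mult.assoc)
      also have "\<dots> = emeasure (density QK (\<lambda>y. ennreal (1 - t + t * h y))) A"
        by (rule emeasure_density[symmetric]) auto
      finally show "emeasure (bind Qt K) A = emeasure (density QK (\<lambda>y. ennreal (1 - t + t * h y))) A" .
    qed
  qed
  show ?thesis using hm hnn hint mix unfolding QK_def by blast
qed

lemma kl_rep:
  assumes Q: "prob_space Q" and h[measurable]: "h \<in> borel_measurable Q" and hnn: "\<And>y. 0 \<le> h y"
  shows "(\<integral>\<^sup>+y. ennreal (ww (h y)) \<partial>Q) = (\<integral>\<^sup>+t. indicator {0<..<1} t * (\<integral>\<^sup>+y. ennreal (kk t (h y)) \<partial>Q) \<partial>lborel)"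
proof -
  interpret prob_space Q by fact
  interpret pair_sigma_finite lborel Q ..
  have m: "(\<lambda>(t, y). ennreal (kk t (h y)) * indicator {0<..<1} t) \<in> borel_measurable (lborel \<Otimes>\<^sub>M Q)"
    unfolding kk_def by measurable
  have "(\<integral>\<^sup>+y. ennreal (ww (h y)) \<partial>Q) = (\<integral>\<^sup>+y. (\<integral>\<^sup>+t. ennreal (kk t (h y)) * indicator {0<..<1} t \<partial>lborel) \<partial>Q)"
    by (intro nn_integral_cong) (simp add: rep_point hnn)
  also have "\<dots> = (\<integral>\<^sup>+t. (\<integral>\<^sup>+y. ennreal (kk t (h y)) * indicator {0<..<1} t \<partial>Q) \<partial>lborel)"
    using Fubini'[of "\<lambda>t y. ennreal (kk t (h y)) * indicator {0<..<1} t", OF m] by simp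
  also have "\<dots> = (\<integral>\<^sup>+t. indicator {0<..<1} t * (\<integral>\<^sup>+y. ennreal (kk t (h y)) \<partial>Q) \<partial>lborel)"
    by (intro nn_integral_cong) (auto split: split_indicator)
  finally show ?thesis .
qed

lemma ratio_le_imp:
  fixes a b :: ennreal
  assumes b: "0 < b" "b < top" and r: "enn2ereal a / enn2ereal b \<le> ereal c" and c: "0 \<le> c"
  shows "a \<le> ennreal c * b"
proof -
  obtain \<beta> where bb: "b = ennreal \<beta>" "\<beta> > 0" using b by (cases b rule: ennreal_cases) auto
  show ?thesis
  proof (cases "a = top")
    case True
    then have "enn2ereal a / enn2ereal b = \<infinity>" using bb by (simp add: enn2ereal_ennreal)
    then show ?thesis using r by simp
  next
    case False
    then obtain \<alpha> where aa: "a = ennreal \<alpha>" "\<alpha> \<ge> 0" by (cases a rule: ennreal_cases) auto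
    have "ereal \<alpha> / ereal \<beta> \<le> ereal c" using r aa bb by (simp add: enn2ereal_ennreal)
    then have "\<alpha> / \<beta> \<le> c" using bb by simp
    then have "\<alpha> \<le> c * \<beta>" using bb by (simp add: divide_le_eq)
    then show ?thesis using aa bb c by (simp add: ennreal_mult[symmetric] del: ennreal_mult)
  qed
qed

lemma le_imp_ratio:
  fixes a b :: ennreal
  assumes b: "0 < b" "b < top" and r: "a \<le> ennreal c * b" and c: "0 \<le> c"
  shows "enn2ereal a / enn2ereal b \<le> ereal c"
proof -
  obtain \<beta> where bb: "b = ennreal \<beta>" "\<beta> > 0" using b by (cases b rule: ennreal_cases) auto
  have "a < top" using r bb by (metis ennreal_mult_less_top ennreal_less_top le_less_trans)
  then obtain \<alpha> where aa: "a = ennreal \<alpha>" "\<alpha> \<ge> 0" by (cases a rule: ennreal_cases) auto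
  have "\<alpha> \<le> c * \<beta>" using r aa bb c by (simp add: ennreal_mult[symmetric] del: ennreal_mult)
  then have "\<alpha> / \<beta> \<le> c" using bb by (simp add: divide_le_eq)
  then show ?thesis using aa bb by (simp add: enn2ereal_ennreal)
qed

lemma ratio_nonneg:
  fixes a b :: ennreal
  assumes b: "0 < b" "b < top"
  shows "0 \<le> enn2ereal a / enn2ereal b"
proof -
  obtain \<beta> where bb: "b = ennreal \<beta>" "\<beta> > 0" using b by (cases b rule: ennreal_cases) auto
  show ?thesis
  proof (cases "a = top")
    case True
    then show ?thesis using bb by (simp add: enn2ereal_ennreal)
  next
    case False
    then obtain \<alpha> where aa: "a = ennreal \<alpha>" "\<alpha> \<ge> 0" by (cases a rule: ennreal_cases) auto
    then show ?thesis using bb by (simp add: enn2ereal_ennreal)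
  qed
qed

lemma kk_bound:
  assumes t: "0 < t" "t < 1" and y: "0 \<le> y"
  shows "kk t y \<le> y/t + 1"
proof -
  define r where "r = 1 - t + t*y"
  have r: "r > 0" using t y unfolding r_def by (smt (verit) mult_nonneg_nonneg)
  have eq: "(y/t+1)*r - (1-t)*(y-1)^2 = y*(1-t)/t + t*y^2 + t*y + 2*(1-t)*y"
    using t unfolding r_def by (simp add: field_simps power2_eq_square)
  have "0 \<le> y*(1-t)/t + t*y^2 + t*y + 2*(1-t)*y" using t y by simp
  then have "(1-t)*(y-1)^2 \<le> (y/t+1)*r" using eq by linarith
  then show ?thesis using r unfolding kk_def r_def[symmetric] by (simp add: divide_le_eq)
qed

lemma kk_zero:
  assumes t: "0 \<le> t" "t < 1" and y: "0 \<le> y" and k: "kk t y = 0"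
  shows "y = 1"
proof -
  have r: "1 - t + t*y > 0" using t y by (smt (verit) mult_nonneg_nonneg)
  then have "(1-t)*(y-1)^2 = 0" using k unfolding kk_def by simp
  then show ?thesis using t by simp
qed

lemma ww_mix_upper:
  assumes e: "0 < e" "e < 1" and y: "0 \<le> y"
  shows "ww (1 - e + e*y) \<le> e^2/(2*(1-e)) * (y-1)^2"
proof -
  have "ww (1 - e + e*y) \<le> ((1 - e + e*y) - 1)^2/(2*(1-e))"
    using e y by (intro ww_upper) auto
  also have "((1 - e + e*y) - 1)^2 = e^2 * (y-1)^2" by (simp add: power2_eq_square algebra_simps)
  finally show ?thesis by simp
qed

lemma ww_mix_lower:
  assumes e: "0 < e" "e < 1" and y: "0 \<le> y"
  shows "e^2/2 * ((y-1)^2 / (1 + e * max (y-1) 0)) \<le> ww (1 - e + e*y)"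
proof -
  have z: "1 - e + e*y > 0" using e y by (smt (verit) mult_nonneg_nonneg)
  have "((1 - e + e*y) - 1)^2 / (2 * max (1 - e + e*y) 1) \<le> ww (1 - e + e*y)"
    by (rule ww_lower[OF z])
  moreover have "((1 - e + e*y) - 1)^2 = e^2 * (y-1)^2" by (simp add: power2_eq_square algebra_simps)
  moreover have "max (1 - e + e*y) 1 = 1 + e * max (y-1) 0"
    using e by (auto simp: max_def algebra_simps mult_le_cancel_left)
  ultimately show ?thesis by simp
qed

lemma not_pm_mix:
  assumes Q: "Q \<in> space (prob_algebra X)" and npm: "\<not> point_mass X Q"
    and f[measurable]: "f \<in> borel_measurable Q" and fnn: "\<And>x. 0 \<le> f x"
    and t: "0 \<le> t" "t < 1"
  shows "\<not> point_mass X (density Q (\<lambda>x. ennreal (1 - t + t * f x)))"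
proof
  assume "point_mass X (density Q (\<lambda>x. ennreal (1 - t + t * f x)))"
  then obtain x where x: "x \<in> space X" and eq: "density Q (\<lambda>x. ennreal (1 - t + t * f x)) = return X x"
    unfolding point_mass_def by auto
  have sQ: "sets Q = sets X" and pQ: "prob_space Q" using Q by (auto simp: space_prob_algebra)
  interpret prob_space Q by fact
  have le: "ennreal (1-t) * emeasure Q A \<le> emeasure (return X x) A" if A: "A \<in> sets Q" for A
  proof -
    have "ennreal (1-t) * emeasure Q A = (\<integral>\<^sup>+y. ennreal (1-t) * indicator A y \<partial>Q)"
      using A by (simp add: nn_integral_cmult_indicator)
    also have "\<dots> \<le> (\<integral>\<^sup>+y. ennreal (1 - t + t * f y) * indicator A y \<partial>Q)"
      using t fnn by (intro nn_integral_mono) (auto split: split_indicator intro!: ennreal_leI)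
    also have "\<dots> = emeasure (density Q (\<lambda>x. ennreal (1 - t + t * f x))) A"
      using A by (subst emeasure_density) auto
    finally show ?thesis unfolding eq .
  qed
  have zero: "emeasure Q A = 0" if A: "A \<in> sets Q" "x \<notin> A" for A
  proof -
    have "ennreal (1-t) * emeasure Q A \<le> 0" using le[OF A(1)] A sQ by simp
    then show ?thesis using t by simp
  qed
  have "Q = return X x"
  proof (rule measure_eqI)
    show "sets Q = sets (return X x)" using sQ by simp
    fix A assume A: "A \<in> sets Q"
    show "emeasure Q A = emeasure (return X x) A"
    proof (cases "x \<in> A")
      case True
      have C: "space Q - A \<in> sets Q" using A by auto
      have "x \<notin> space Q - A" using True by simp
      then have "emeasure Q (space Q - A) = 0" using zero[OF C] by simp
      moreover have "emeasure Q (space Q - A) = 1 - emeasure Q A"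
        using A by (simp add: emeasure_compl emeasure_space_1)
      moreover have "emeasure Q A \<le> 1" using A by (simp add: emeasure_le_1)
      ultimately have "emeasure Q A = 1"
        by (metis diff_eq_0_iff_ennreal order_antisym_conv top.not_eq_extremum top_greatest ennreal_one_less_top emeasure_le_1 emeasure_space_1 A)
      then show ?thesis using True A sQ by simp
    next
      case False
      then show ?thesis using zero[OF A] A sQ by simp
    qed
  qed
  then show False using npm x unfolding point_mass_def by auto
qed

lemma kl_fin_ac: "kl_div P Q < \<infinity> \<Longrightarrow> sets P = sets Q \<and> absolutely_continuous Q P"
  unfolding kl_div_def by (auto split: if_splits)

lemma chi2_fin_ac: "chi2_div P Q < \<infinity> \<Longrightarrow> sets P = sets Q \<and> absolutely_continuous Q P"
  unfolding chi2_div_def by (auto split: if_splits)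

lemma enn2ereal_pos: "0 < enn2ereal a \<Longrightarrow> 0 < a"
  by (simp add: zero_ennreal.rep_eq less_ennreal.rep_eq)

lemma enn2ereal_fin: "enn2ereal a < \<infinity> \<Longrightarrow> a < top"
  by (metis enn2ereal_top less_ennreal.rep_eq)

lemma setup_PQ:
  assumes K: "K \<in> X \<rightarrow>\<^sub>M prob_algebra Y" and Q: "Q \<in> space (prob_algebra X)"
    and P: "P \<in> space (prob_algebra X)" and ac: "sets P = sets Q \<and> absolutely_continuous Q P"
  obtains f h where "f \<in> borel_measurable Q" "\<And>x. 0 \<le> f x" "(\<integral>\<^sup>+x. ennreal (f x) \<partial>Q) = 1"
    "P = density Q (\<lambda>x. ennreal (f x))"
    "h \<in> borel_measurable (bind Q K)" "\<And>y. 0 \<le> h y" "(\<integral>\<^sup>+y. ennreal (h y) \<partial>(bind Q K)) = 1"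
    "bind P K = density (bind Q K) (\<lambda>y. ennreal (h y))"
    "\<And>t. 0 \<le> t \<Longrightarrow> t \<le> 1 \<Longrightarrow> bind (density Q (\<lambda>x. ennreal (1 - t + t * f x))) K = density (bind Q K) (\<lambda>y. ennreal (1 - t + t * h y))"
proof -
  have pQ: "prob_space Q" and pP: "prob_space P" using Q P by (auto simp: space_prob_algebra)
  obtain f where fm: "f \<in> borel_measurable Q" and fnn: "\<forall>x. 0 \<le> f x" and fint: "(\<integral>\<^sup>+x. ennreal (f x) \<partial>Q) = 1"
    and Pd: "P = density Q (\<lambda>x. ennreal (f x))"
    using density_rep[OF pQ pP] ac by blast
  obtain h where hm: "h \<in> borel_measurable (bind Q K)" and hnn: "\<forall>y. 0 \<le> h y"
    and hint: "(\<integral>\<^sup>+y. ennreal (h y) \<partial>(bind Q K)) = 1"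
    and mix: "\<forall>t. 0 \<le> t \<longrightarrow> t \<le> 1 \<longrightarrow> bind (density Q (\<lambda>x. ennreal (1 - t + t * f x))) K = density (bind Q K) (\<lambda>y. ennreal (1 - t + t * h y))"
    using bind_density_rep[OF Q K fm _ fint] fnn by blast
  have "bind P K = density (bind Q K) (\<lambda>y. ennreal (h y))"
    using mix[rule_format, of 1] Pd by simp
  then show ?thesis using that fm fnn fint Pd hm hnn hint mix by blast
qed

lemma cancel_pos:
  fixes X Y :: ennreal
  assumes t: "0 < s" and le: "ennreal s * X \<le> ennreal s * Y"
  shows "X \<le> Y"
proof -
  have "ennreal (1/s) * (ennreal s * X) \<le> ennreal (1/s) * (ennreal s * Y)"
    using le by (rule mult_left_mono) simp
  moreover have "ennreal (1/s) * ennreal s = 1" using t by (simp add: ennreal_mult[symmetric] del: ennreal_mult)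
  ultimately show ?thesis by (simp add: mult.assoc[symmetric])
qed

lemma claimB:
  assumes K: "K \<in> X \<rightarrow>\<^sub>M prob_algebra Y" and Q: "Q \<in> space (prob_algebra X)" and npm: "\<not> point_mass X Q"
  shows "eta_at kl_div kl_div X K Q \<le> eta_chi2 X K"
  unfolding eta_at_def
proof (rule SUP_least)
  fix P assume "P \<in> {P \<in> space (prob_algebra X). 0 < kl_div P Q \<and> kl_div P Q < \<infinity>}"
  then have P: "P \<in> space (prob_algebra X)" and pos: "0 < kl_div P Q" and fin: "kl_div P Q < \<infinity>" by auto
  have sQ: "sets Q = sets X" and pQ: "prob_space Q" using Q by (auto simp: space_prob_algebra)
  interpret Qp: prob_space Q by fact
  obtain f h where fm[measurable]: "f \<in> borel_measurable Q" and fnn: "\<And>x. 0 \<le> f x"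
    and fint: "(\<integral>\<^sup>+x. ennreal (f x) \<partial>Q) = 1" and Pd: "P = density Q (\<lambda>x. ennreal (f x))"
    and hm[measurable]: "h \<in> borel_measurable (bind Q K)" and hnn: "\<And>y. 0 \<le> h y"
    and hint: "(\<integral>\<^sup>+y. ennreal (h y) \<partial>(bind Q K)) = 1"
    and PKd: "bind P K = density (bind Q K) (\<lambda>y. ennreal (h y))"
    and mix: "\<And>t. 0 \<le> t \<Longrightarrow> t \<le> 1 \<Longrightarrow> bind (density Q (\<lambda>x. ennreal (1 - t + t * f x))) K = density (bind Q K) (\<lambda>y. ennreal (1 - t + t * h y))"
    by (rule setup_PQ[OF K Q P kl_fin_ac[OF fin]]) blast
  define QK where "QK = bind Q K"
  have pQK: "prob_space QK" unfolding QK_def by (rule prob_space_bind'[OF Q K])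
  interpret QKp: prob_space QK by fact
  have hm'[measurable]: "h \<in> borel_measurable QK" using hm by (simp add: QK_def)
  have hint': "(\<integral>\<^sup>+y. ennreal (h y) \<partial>QK) = 1" using hint by (simp add: QK_def)
  define WF where "WF = (\<integral>\<^sup>+x. ennreal (ww (f x)) \<partial>Q)"
  define WH where "WH = (\<integral>\<^sup>+y. ennreal (ww (h y)) \<partial>QK)"
  have KLP: "kl_div P Q = enn2ereal WF"
    unfolding Pd WF_def by (rule kl_density[OF pQ fm fnn fint])
  have KLPK: "kl_div (bind P K) (bind Q K) = enn2ereal WH"
    unfolding PKd WH_def QK_def[symmetric] by (rule kl_density[OF pQK hm' hnn]) (simp add: hint QK_def)
  have WFpos: "0 < WF" using pos KLP by (simp add: enn2ereal_pos)
  have WFfin: "WF < top" using fin KLP by (simp add: enn2ereal_fin)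
  define A where "A t = ennreal (1-t) * (\<integral>\<^sup>+y. ennreal (kk t (h y)) \<partial>QK)" for t
  define B where "B t = ennreal (1-t) * (\<integral>\<^sup>+x. ennreal (kk t (f x)) \<partial>Q)" for t
  have key: "enn2ereal (A t) / enn2ereal (B t) \<le> eta_chi2 X K \<and> 0 < B t \<and> B t < top"
    if t: "0 < t" "t < 1" for t
  proof -
    define Qt where "Qt = density Q (\<lambda>x. ennreal (1 - t + t * f x))"
    have mt[measurable]: "(\<lambda>x. 1 - t + t * f x) \<in> borel_measurable Q" by measurable
    have Qt_in: "Qt \<in> space (prob_algebra X)"
      using prob_space_density1[OF pQ mt int_mix[OF pQ fm fnn fint]] t sQ
      by (simp add: space_prob_algebra Qt_def)
    have npmt: "\<not> point_mass X Qt" unfolding Qt_def using t by (intro not_pm_mix[OF Q npm fm fnn]) auto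
    have c1: "chi2_div P Qt = enn2ereal (B t)"
      unfolding Pd Qt_def B_def using t by (intro chi2_mix[OF pQ fm fnn fint]) auto
    have c2: "chi2_div (bind P K) (bind Qt K) = enn2ereal (A t)"
    proof -
      have "bind Qt K = density QK (\<lambda>y. ennreal (1 - t + t * h y))"
        unfolding Qt_def QK_def using t by (intro mix) auto
      moreover have "chi2_div (density QK (\<lambda>y. ennreal (h y))) (density QK (\<lambda>y. ennreal (1 - t + t * h y))) = enn2ereal (A t)"
        unfolding A_def using t by (intro chi2_mix[OF pQK hm' hnn hint']) auto
      ultimately show ?thesis unfolding PKd QK_def[symmetric] by simp
    qed
    have "(\<integral>\<^sup>+x. ennreal (kk t (f x)) \<partial>Q) \<le> (\<integral>\<^sup>+x. ennreal (1/t) * ennreal (f x) + 1 \<partial>Q)"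
    proof (intro nn_integral_mono)
      fix x
      have "kk t (f x) \<le> f x / t + 1" using t fnn[of x] by (intro kk_bound) auto
      also have "f x / t + 1 = (1/t) * f x + 1" by simp
      finally have "ennreal (kk t (f x)) \<le> ennreal ((1/t) * f x + 1)" by (rule ennreal_leI)
      also have "ennreal ((1/t) * f x + 1) = ennreal (1/t) * ennreal (f x) + 1"
        using t fnn[of x] by (simp add: ennreal_plus ennreal_mult[symmetric] del: ennreal_mult)
      finally show "ennreal (kk t (f x)) \<le> ennreal (1/t) * ennreal (f x) + 1" .
    qed
    also have "\<dots> = ennreal (1/t) * 1 + 1"
      by (simp add: nn_integral_add nn_integral_cmult fint Qp.emeasure_space_1)
    also have "\<dots> < top" by simp
    finally have Bfin: "B t < top" unfolding B_def by (simp add: ennreal_mult_less_top)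
    have Bpos: "0 < B t"
    proof (rule ccontr)
      assume "\<not> 0 < B t"
      then have "B t = 0" by simp
      then have "(\<integral>\<^sup>+x. ennreal (kk t (f x)) \<partial>Q) = 0" using t unfolding B_def by simp
      then have "AE x in Q. ennreal (kk t (f x)) = 0"
        by (subst (asm) nn_integral_0_iff_AE) (unfold kk_def, measurable)
      then have "AE x in Q. f x = 1"
      proof (rule eventually_mono)
        fix x assume "ennreal (kk t (f x)) = 0"
        then have "kk t (f x) \<le> 0" by (simp only: ennreal_eq_0_iff)
        moreover have "0 \<le> kk t (f x)" using t fnn[of x] by (intro kk_nonneg) auto
        ultimately show "f x = 1" using t fnn[of x] by (intro kk_zero[of t]) auto
      qed
      then have "WF = (\<integral>\<^sup>+x. 0 \<partial>Q)" unfolding WF_def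
        by (intro nn_integral_cong_AE) (auto elim!: eventually_mono simp: ww_def)
      then show False using WFpos by simp
    qed
    have "chi2_div (bind P K) (bind Qt K) / chi2_div P Qt \<le> eta_at chi2_div chi2_div X K Qt"
      unfolding eta_at_def by (rule SUP_upper) (use P c1 Bpos Bfin in \<open>auto simp: zero_ennreal.rep_eq less_ennreal.rep_eq enn2ereal_fin\<close>)
    also have "\<dots> \<le> eta_chi2 X K"
      unfolding eta_chi2_def eta_def by (rule SUP_upper) (simp add: Qt_in npmt)
    finally show ?thesis using c1 c2 Bpos Bfin by simp
  qed
  have "0 \<le> eta_chi2 X K"
  proof -
    have k: "enn2ereal (A (1/2)) / enn2ereal (B (1/2)) \<le> eta_chi2 X K" "0 < B (1/2)" "B (1/2) < top"
      using key[of "1/2"] by auto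
    show ?thesis using order_trans[OF ratio_nonneg[OF k(2,3), of "A (1/2)"] k(1)] .
  qed
  show "kl_div (bind P K) (bind Q K) / kl_div P Q \<le> eta_chi2 X K"
  proof (cases "eta_chi2 X K = \<infinity>")
    case True then show ?thesis by simp
  next
    case False
    with \<open>0 \<le> eta_chi2 X K\<close> obtain c where c: "eta_chi2 X K = ereal c" "0 \<le> c"
      by (cases "eta_chi2 X K") auto
    have pt: "(\<integral>\<^sup>+y. ennreal (kk t (h y)) \<partial>QK) \<le> ennreal c * (\<integral>\<^sup>+x. ennreal (kk t (f x)) \<partial>Q)"
      if t: "0 < t" "t < 1" for t
    proof -
      have "A t \<le> ennreal c * B t"
        using key[OF t] c by (intro ratio_le_imp) auto
      then have "ennreal (1-t) * (\<integral>\<^sup>+y. ennreal (kk t (h y)) \<partial>QK) \<le> ennreal (1-t) * (ennreal c * (\<integral>\<^sup>+x. ennreal (kk t (f x)) \<partial>Q))"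
        unfolding A_def B_def by (simp add: ac_simps)
      then show ?thesis by (rule cancel_pos[rotated]) (use t in simp)
    qed
    have mf: "(\<lambda>s. \<integral>\<^sup>+y. ennreal (kk s (f y)) \<partial>Q) \<in> borel_measurable lborel"
      by (rule Qp.borel_measurable_nn_integral) (unfold kk_def, measurable)
    have "WH = (\<integral>\<^sup>+s. indicator {0<..<1} s * (\<integral>\<^sup>+y. ennreal (kk s (h y)) \<partial>QK) \<partial>lborel)"
      unfolding WH_def by (rule kl_rep[OF pQK hm' hnn])
    also have "\<dots> \<le> (\<integral>\<^sup>+s. ennreal c * (indicator {0<..<1} s * (\<integral>\<^sup>+x. ennreal (kk s (f x)) \<partial>Q)) \<partial>lborel)"
    proof (intro nn_integral_mono)
      fix s :: real
      show "indicator {0<..<1} s * (\<integral>\<^sup>+y. ennreal (kk s (h y)) \<partial>QK) \<le> ennreal c * (indicator {0<..<1} s * (\<integral>\<^sup>+x. ennreal (kk s (f x)) \<partial>Q))"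
      proof (cases "s \<in> {0<..<1}")
        case True
        then have "0 < s" "s < 1" by auto
        from pt[OF this] True show ?thesis by simp
      qed simp
    qed
    also have "\<dots> = ennreal c * (\<integral>\<^sup>+s. indicator {0<..<1} s * (\<integral>\<^sup>+x. ennreal (kk s (f x)) \<partial>Q) \<partial>lborel)"
      by (rule nn_integral_cmult) (use mf in measurable)
    also have "(\<integral>\<^sup>+s. indicator {0<..<1} s * (\<integral>\<^sup>+x. ennreal (kk s (f x)) \<partial>Q) \<partial>lborel) = WF"
      unfolding WF_def by (rule kl_rep[OF pQ fm fnn, symmetric])
    finally have "WH \<le> ennreal c * WF" .
    then have "enn2ereal WH / enn2ereal WF \<le> ereal c"
      by (rule le_imp_ratio[OF WFpos WFfin _ c(2)])
    then show ?thesis using KLP KLPK c by simp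
  qed
qed

lemma gseq_mono:
  assumes a: "0 \<le> a" and d: "0 \<le> d" and nm: "n \<le> m"
  shows "a / (1 + d/(real n + 2)) \<le> a / (1 + d/(real m + 2))"
proof -
  have "d/(real m + 2) \<le> d/(real n + 2)" using d nm by (intro divide_left_mono) auto
  moreover have "0 \<le> d/(real m + 2)" using d by simp
  ultimately show ?thesis using a by (intro divide_left_mono) (auto simp: add_pos_nonneg)
qed

lemma sup_lim:
  assumes a: "0 \<le> a" and d: "0 \<le> d"
  shows "(SUP n. ennreal (a / (1 + d/(real n + 2)))) = ennreal a"
proof -
  define u where "u n = ennreal (a / (1 + d/(real n + 2)))" for n
  have inc: "incseq u" unfolding u_def incseq_def
    using gseq_mono[OF a d] by (auto intro: ennreal_leI)
  have l0: "(\<lambda>n. d / of_nat (n + 2)) \<longlonglongrightarrow> (0::real)"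
    using LIMSEQ_ignore_initial_segment[OF lim_const_over_n[of d], of 2] .
  then have l1: "(\<lambda>n. d / (real n + 2)) \<longlonglongrightarrow> 0" by (simp add: add.commute)
  have "(\<lambda>n. a / (1 + d/(real n + 2))) \<longlonglongrightarrow> a / (1 + 0)"
    by (intro tendsto_intros l1) simp
  then have "u \<longlonglongrightarrow> ennreal a" unfolding u_def by (intro tendsto_ennrealI) simp
  moreover have "u \<longlonglongrightarrow> (SUP n. u n)" by (rule LIMSEQ_SUP[OF inc])
  ultimately show ?thesis unfolding u_def using LIMSEQ_unique by blast
qed

lemma claimA:
  assumes K: "K \<in> X \<rightarrow>\<^sub>M prob_algebra Y" and Q: "Q \<in> space (prob_algebra X)" and npm: "\<not> point_mass X Q"
  shows "eta_at chi2_div chi2_div X K Q \<le> eta_KL X K"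
  unfolding eta_at_def
proof (rule SUP_least)
  fix P assume "P \<in> {P \<in> space (prob_algebra X). 0 < chi2_div P Q \<and> chi2_div P Q < \<infinity>}"
  then have P: "P \<in> space (prob_algebra X)" and pos: "0 < chi2_div P Q" and fin: "chi2_div P Q < \<infinity>" by auto
  have sQ: "sets Q = sets X" and pQ: "prob_space Q" using Q by (auto simp: space_prob_algebra)
  interpret Qp: prob_space Q by fact
  obtain f h where fm[measurable]: "f \<in> borel_measurable Q" and fnn: "\<And>x. 0 \<le> f x"
    and fint: "(\<integral>\<^sup>+x. ennreal (f x) \<partial>Q) = 1" and Pd: "P = density Q (\<lambda>x. ennreal (f x))"
    and hm[measurable]: "h \<in> borel_measurable (bind Q K)" and hnn: "\<And>y. 0 \<le> h y"
    and hint: "(\<integral>\<^sup>+y. ennreal (h y) \<partial>(bind Q K)) = 1"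
    and PKd: "bind P K = density (bind Q K) (\<lambda>y. ennreal (h y))"
    and mix: "\<And>t. 0 \<le> t \<Longrightarrow> t \<le> 1 \<Longrightarrow> bind (density Q (\<lambda>x. ennreal (1 - t + t * f x))) K = density (bind Q K) (\<lambda>y. ennreal (1 - t + t * h y))"
    by (rule setup_PQ[OF K Q P chi2_fin_ac[OF fin]]) blast
  define QK where "QK = bind Q K"
  have pQK: "prob_space QK" unfolding QK_def by (rule prob_space_bind'[OF Q K])
  interpret QKp: prob_space QK by fact
  have hm'[measurable]: "h \<in> borel_measurable QK" using hm by (simp add: QK_def)
  have hint': "(\<integral>\<^sup>+y. ennreal (h y) \<partial>QK) = 1" using hint by (simp add: QK_def)
  define C where "C = (\<integral>\<^sup>+x. ennreal ((f x - 1)^2) \<partial>Q)"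
  define D where "D = (\<integral>\<^sup>+y. ennreal ((h y - 1)^2) \<partial>QK)"
  have CHP: "chi2_div P Q = enn2ereal C"
    unfolding Pd C_def by (rule chi2_density[OF pQ fm fnn fint])
  have CHPK: "chi2_div (bind P K) (bind Q K) = enn2ereal D"
    unfolding PKd D_def QK_def[symmetric] by (rule chi2_density[OF pQK hm' hnn hint'])
  have Cpos: "0 < C" using pos CHP by (simp add: enn2ereal_pos)
  have Cfin: "C < top" using fin CHP by (simp add: enn2ereal_fin)
  define WF where "WF e = (\<integral>\<^sup>+x. ennreal (ww (1 - e + e * f x)) \<partial>Q)" for e
  define WH where "WH e = (\<integral>\<^sup>+y. ennreal (ww (1 - e + e * h y)) \<partial>QK)" for e
  have key: "enn2ereal (WH e) / enn2ereal (WF e) \<le> eta_KL X K \<and> 0 < WF e \<and> WF e < top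
      \<and> WF e \<le> ennreal (e^2/(2*(1-e))) * C"
    if e: "0 < e" "e < 1" for e
  proof -
    define Pe where "Pe = density Q (\<lambda>x. ennreal (1 - e + e * f x))"
    have mt[measurable]: "(\<lambda>x. 1 - e + e * f x) \<in> borel_measurable Q" by measurable
    have nn: "0 \<le> 1 - e + e * f x" for x using e fnn[of x] by (smt (verit) mult_nonneg_nonneg)
    have ie: "(\<integral>\<^sup>+x. ennreal (1 - e + e * f x) \<partial>Q) = 1" using e by (intro int_mix[OF pQ fm fnn fint]) auto
    have Pe_in: "Pe \<in> space (prob_algebra X)"
      using prob_space_density1[OF pQ mt ie] sQ by (simp add: space_prob_algebra Pe_def)
    have k1: "kl_div Pe Q = enn2ereal (WF e)"
      unfolding Pe_def WF_def by (rule kl_density[OF pQ mt nn ie])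
    have k2: "kl_div (bind Pe K) (bind Q K) = enn2ereal (WH e)"
    proof -
      have "bind Pe K = density QK (\<lambda>y. ennreal (1 - e + e * h y))"
        unfolding Pe_def QK_def using e by (intro mix) auto
      moreover have "kl_div (density QK (\<lambda>y. ennreal (1 - e + e * h y))) QK = enn2ereal (WH e)"
        unfolding WH_def
      proof (rule kl_density[OF pQK])
        show "(\<lambda>y. 1 - e + e * h y) \<in> borel_measurable QK" by measurable
        show "0 \<le> 1 - e + e * h y" for y using e hnn[of y] by (smt (verit) mult_nonneg_nonneg)
        show "(\<integral>\<^sup>+y. ennreal (1 - e + e * h y) \<partial>QK) = 1" using e by (intro int_mix[OF pQK hm' hnn hint']) auto
      qed
      ultimately show ?thesis unfolding QK_def[symmetric] by simp
    qed
    have up: "WF e \<le> ennreal (e^2/(2*(1-e))) * C"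
    proof -
      have "WF e \<le> (\<integral>\<^sup>+x. ennreal (e^2/(2*(1-e))) * ennreal ((f x - 1)^2) \<partial>Q)"
        unfolding WF_def
      proof (intro nn_integral_mono)
        fix x
        have "ww (1 - e + e * f x) \<le> e^2/(2*(1-e)) * (f x - 1)^2" using e fnn[of x] by (intro ww_mix_upper) auto
        then have "ennreal (ww (1 - e + e * f x)) \<le> ennreal (e^2/(2*(1-e)) * (f x - 1)^2)" by (rule ennreal_leI)
        also have "\<dots> = ennreal (e^2/(2*(1-e))) * ennreal ((f x - 1)^2)"
          using e by (intro ennreal_mult) auto
        finally show "ennreal (ww (1 - e + e * f x)) \<le> ennreal (e^2/(2*(1-e))) * ennreal ((f x - 1)^2)" .
      qed
      also have "\<dots> = ennreal (e^2/(2*(1-e))) * C"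
        unfolding C_def by (rule nn_integral_cmult) measurable
      finally show ?thesis .
    qed
    have WFfin: "WF e < top" using up Cfin by (metis ennreal_mult_less_top ennreal_less_top le_less_trans)
    have WFpos: "0 < WF e"
    proof (rule ccontr)
      assume "\<not> 0 < WF e"
      then have "WF e = 0" by simp
      then have "AE x in Q. ennreal (ww (1 - e + e * f x)) = 0"
        unfolding WF_def by (subst (asm) nn_integral_0_iff_AE) (unfold ww_def, measurable)
      then have "AE x in Q. ennreal ((f x - 1)^2) = 0"
      proof (rule eventually_mono)
        fix x assume "ennreal (ww (1 - e + e * f x)) = 0"
        then have "ww (1 - e + e * f x) \<le> 0" by (simp only: ennreal_eq_0_iff)
        moreover have "0 \<le> ww (1 - e + e * f x)" using nn[of x] by (rule ww_nonneg)
        ultimately have "1 - e + e * f x = 1" using nn[of x] by (intro ww_zero) auto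
        then have "f x = 1" using e by simp
        then show "ennreal ((f x - 1)^2) = 0" by simp
      qed
      then have "C = (\<integral>\<^sup>+x. 0 \<partial>Q)" unfolding C_def
        by (intro nn_integral_cong_AE) auto
      then show False using Cpos by simp
    qed
    have "kl_div (bind Pe K) (bind Q K) / kl_div Pe Q \<le> eta_at kl_div kl_div X K Q"
      unfolding eta_at_def by (rule SUP_upper) (use Pe_in k1 WFpos WFfin in \<open>auto simp: zero_ennreal.rep_eq less_ennreal.rep_eq\<close>)
    also have "\<dots> \<le> eta_KL X K"
      unfolding eta_KL_def eta_def by (rule SUP_upper) (simp add: Q npm)
    finally show ?thesis using k1 k2 WFpos WFfin up by simp
  qed
  have "0 \<le> eta_KL X K"
  proof -
    have k: "enn2ereal (WH (1/2)) / enn2ereal (WF (1/2)) \<le> eta_KL X K" "0 < WF (1/2)" "WF (1/2) < top"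
      using key[of "1/2"] by auto
    show ?thesis using order_trans[OF ratio_nonneg[OF k(2,3), of "WH (1/2)"] k(1)] .
  qed
  show "chi2_div (bind P K) (bind Q K) / chi2_div P Q \<le> eta_KL X K"
  proof (cases "eta_KL X K = \<infinity>")
    case True then show ?thesis by simp
  next
    case False
    with \<open>0 \<le> eta_KL X K\<close> obtain c where c: "eta_KL X K = ereal c" "0 \<le> c"
      by (cases "eta_KL X K") auto
    obtain Cr where Cr: "C = ennreal Cr" "0 \<le> Cr" using Cfin by (cases C rule: ennreal_cases) auto
    define G where "G n y = (h y - 1)^2 / (1 + max (h y - 1) 0 / (real n + 2))" for n y
    have Gm[measurable]: "(\<lambda>y. ennreal (G n y)) \<in> borel_measurable QK" for n unfolding G_def by measurable
    have bound: "(\<integral>\<^sup>+y. ennreal (G n y) \<partial>QK) \<le> ennreal (c * Cr * (real n + 2) / (real n + 1))" for n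
    proof -
      define e where "e = 1 / (real n + 2)"
      have e: "0 < e" "e < 1" unfolding e_def by auto
      have WHle: "WH e \<le> ennreal c * WF e"
        using key[OF e] c by (intro ratio_le_imp) auto
      have lower: "ennreal (e^2/2) * (\<integral>\<^sup>+y. ennreal (G n y) \<partial>QK) \<le> WH e"
      proof -
        have "ennreal (e^2/2) * (\<integral>\<^sup>+y. ennreal (G n y) \<partial>QK) = (\<integral>\<^sup>+y. ennreal (e^2/2) * ennreal (G n y) \<partial>QK)"
          by (rule nn_integral_cmult[symmetric]) measurable
        also have "\<dots> \<le> WH e" unfolding WH_def
        proof (intro nn_integral_mono)
          fix y
          have "G n y = (h y - 1)^2 / (1 + e * max (h y - 1) 0)" unfolding G_def e_def by simp
          moreover have "e^2/2 * ((h y - 1)^2 / (1 + e * max (h y - 1) 0)) \<le> ww (1 - e + e * h y)"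
            using e hnn[of y] by (intro ww_mix_lower) auto
          moreover have "0 \<le> G n y" unfolding G_def by (intro divide_nonneg_pos) (auto simp: add_pos_nonneg)
          ultimately show "ennreal (e^2/2) * ennreal (G n y) \<le> ennreal (ww (1 - e + e * h y))"
            by (simp add: ennreal_mult[symmetric] ennreal_leI del: ennreal_mult)
        qed
        finally show ?thesis .
      qed
      have "ennreal (e^2/2) * (\<integral>\<^sup>+y. ennreal (G n y) \<partial>QK) \<le> ennreal c * (ennreal (e^2/(2*(1-e))) * C)"
        using lower WHle key[OF e] by (meson mult_left_mono order_trans zero_le)
      also have "\<dots> = ennreal (e^2/2) * ennreal (c * Cr * (real n + 2) / (real n + 1))"
      proof -
        have "c * (e^2/(2*(1-e))) * Cr = e^2/2 * (c * Cr * (real n + 2) / (real n + 1))"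
          unfolding e_def by (simp add: field_simps)
        then show ?thesis using e c Cr
          by (simp add: ennreal_mult[symmetric] mult.assoc del: ennreal_mult)
      qed
      finally show ?thesis by (rule cancel_pos[rotated]) (use e in simp)
    qed
    have inc: "incseq (\<lambda>n y. ennreal (G n y))"
      unfolding incseq_def le_fun_def G_def
      by (auto intro!: ennreal_leI gseq_mono)
    have "D = (\<integral>\<^sup>+y. (SUP n. ennreal (G n y)) \<partial>QK)"
      unfolding D_def G_def by (intro nn_integral_cong) (simp add: sup_lim)
    also have "\<dots> = (SUP n. \<integral>\<^sup>+y. ennreal (G n y) \<partial>QK)"
      by (rule nn_integral_monotone_convergence_SUP[OF inc]) measurable
    also have "\<dots> \<le> ennreal (c * Cr)"
    proof (rule ennreal_le_epsilon)
      fix eps :: real assume eps: "0 < eps"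
      obtain N :: nat where N: "c * Cr / eps < real N" using reals_Archimedean2 by blast
      show "(SUP n. \<integral>\<^sup>+y. ennreal (G n y) \<partial>QK) \<le> ennreal (c * Cr) + ennreal eps"
      proof (rule SUP_least)
        fix n
        define m where "m = max n N"
        have "(\<integral>\<^sup>+y. ennreal (G n y) \<partial>QK) \<le> (\<integral>\<^sup>+y. ennreal (G m y) \<partial>QK)"
          using inc unfolding m_def incseq_def by (intro nn_integral_mono) (auto simp: le_fun_def)
        also have "\<dots> \<le> ennreal (c * Cr * (real m + 2) / (real m + 1))" by (rule bound)
        also have "c * Cr * (real m + 2) / (real m + 1) \<le> c * Cr + eps"
        proof -
          have cc: "0 \<le> c * Cr" using c Cr by simp
          have "c * Cr * (real m + 2) / (real m + 1) = c * Cr + c * Cr / (real m + 1)"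
            by (simp add: field_simps)
          moreover have "c * Cr / (real m + 1) \<le> c * Cr / (real N + 1)"
            using cc unfolding m_def by (intro divide_left_mono) auto
          moreover have "c * Cr / (real N + 1) \<le> eps"
          proof -
            have "c * Cr < eps * real N" using N eps by (simp add: divide_less_eq mult.commute)
            then have "c * Cr \<le> eps * (real N + 1)" using eps by (simp add: algebra_simps)
            then show ?thesis by (simp add: divide_le_eq mult.commute)
          qed
          ultimately show ?thesis by linarith
        qed
        then have "ennreal (c * Cr * (real m + 2) / (real m + 1)) \<le> ennreal (c * Cr) + ennreal eps"
          using c Cr eps by (simp add: ennreal_plus[symmetric] ennreal_leI del: ennreal_plus)
        finally show "(\<integral>\<^sup>+y. ennreal (G n y) \<partial>QK) \<le> ennreal (c * Cr) + ennreal eps" .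
      qed
    qed
    finally have "D \<le> ennreal c * C" using Cr c by (simp add: ennreal_mult)
    then have "enn2ereal D / enn2ereal C \<le> ereal c"
      by (rule le_imp_ratio[OF Cpos Cfin _ c(2)])
    then show ?thesis using CHP CHPK c by simp
  qed
qed

theorem theorem3:
  fixes X :: "'a measure" and Y :: "'b measure" and K :: "'a \<Rightarrow> 'b measure"
  assumes "K \<in> measurable X (prob_algebra Y)"
  shows "eta_chi2 X K = eta_KL X K"
proof (rule antisym)
  show "eta_chi2 X K \<le> eta_KL X K"
    unfolding eta_chi2_def eta_def by (rule SUP_least) (auto intro: claimA[OF assms])
  show "eta_KL X K \<le> eta_chi2 X K"
    unfolding eta_KL_def eta_def by (rule SUP_least) (auto intro: claimB[OF assms])
qed

end
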